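(* Let $n\ge1$ and $\beta\in\mathbb C$, $\beta\ne0$. Let $\tilde t^{(r)}_{ij}$ ($1\le i,j\le n$, $r\ge1$) be elements of a unital associative $\mathbb C$-algebra, put $\tilde t^{(0)}_{ij}=\delta_{ij}$ and $\tilde T_{ij}(u)=\sum_{r\ge0}\tilde t^{(r)}_{ij}u^{-r}$. Then the relations $$\left(u+\frac\beta u-v-\frac\beta v\right)[\tilde T_{ij}(u),\tilde T_{kl}(v)]=\tilde T_{kj}(u)\tilde T_{il}(v)-\tilde T_{kj}(v)\tilde T_{il}(u)\qquad(1\le i,j,k,l\le n)$$ hold if and only if for all $r,s\ge1$ and all $i,j,k,l$ $$[\tilde t^{(r)}_{ij},\tilde t^{(s)}_{kl}]=\sum_{\substack{p,m\ge0\\ m-s\le p\le r-m-1}}\beta^m\left(\tilde t^{(r-p-m-1)}_{kj}\tilde t^{(p+s-m)}_{il}-\tilde t^{(p+s-m)}_{kj}\tilde t^{(r-p-m-1)}_{il}\right).$$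
   Context: The first system is the defining relation system (in generating-series form) of the algebra $OY_\beta(\mathfrak{gl}_n)$ attached to Dickson polynomials; it is equivalent to the matrix relation $R^\beta(u,v)\tilde T_1(u)\tilde T_2(v)=\tilde T_2(v)\tilde T_1(u)R^\beta(u,v)$ with $R^\beta(u,v)=I-\frac{1}{u+\beta/u-v-\beta/v}P$, $P$ the permutation operator on $\mathbb C^n\otimes\mathbb C^n$. The identity of series is understood by comparing coefficients of monomials $u^{a}v^{b}$. *)

theory Defs
  imports Complex_Main
begin

text \<open>A unital associative complex algebra is a ring_1 'a together with a unital ring
  homomorphism sc from the complex numbers into the centre of 'a; the scalar action is
  c . x = sc c * x.\<close>
definition calg_struct :: "(complex \<Rightarrow> 'a::ring_1) \<Rightarrow> bool" where
  "calg_struct sc \<longleftrightarrow> sc 1 = 1 \<and> (\<forall>a b. sc (a + b) = sc a + sc b)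
     \<and> (\<forall>a b. sc (a * b) = sc a * sc b) \<and> (\<forall>a x. sc a * x = x * sc a)"

definition commut :: "'a::ring \<Rightarrow> 'a \<Rightarrow> 'a" where
  "commut x y = x * y - y * x"

text \<open>Coefficients with the convention t^(0)_ij = delta_ij, and t^(r) = 0 for r < 0
  (integer index: coefficient of u^(-r) in T_ij(u)).\<close>
definition tc :: "(nat \<Rightarrow> nat \<Rightarrow> nat \<Rightarrow> 'a::ring_1) \<Rightarrow> nat \<Rightarrow> nat \<Rightarrow> int \<Rightarrow> 'a" where
  "tc t i j r = (if r < 0 then 0 else if r = 0 then (if i = j then 1 else 0) else t i j (nat r))"

text \<open>Two-variable series in u, v are encoded by their coefficient functions:
  F a b is the coefficient of u^(-a) v^(-b) (a, b integers).\<close>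
type_synonym 'a ser2 = "int \<Rightarrow> int \<Rightarrow> 'a"

text \<open>f(u) g(v) and f(v) g(u) for one-variable series f, g (coefficient of w^(-r) at r).\<close>
definition ser_uv :: "(int \<Rightarrow> 'a::ring_1) \<Rightarrow> (int \<Rightarrow> 'a) \<Rightarrow> 'a ser2" where
  "ser_uv f g = (\<lambda>a b. f a * g b)"
definition ser_vu :: "(int \<Rightarrow> 'a::ring_1) \<Rightarrow> (int \<Rightarrow> 'a) \<Rightarrow> 'a ser2" where
  "ser_vu f g = (\<lambda>a b. f b * g a)"

definition mul_u :: "'a ser2 \<Rightarrow> 'a ser2" where "mul_u F = (\<lambda>a b. F (a + 1) b)"
definition mul_uinv :: "'a ser2 \<Rightarrow> 'a ser2" where "mul_uinv F = (\<lambda>a b. F (a - 1) b)"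
definition mul_v :: "'a ser2 \<Rightarrow> 'a ser2" where "mul_v F = (\<lambda>a b. F a (b + 1))"
definition mul_vinv :: "'a ser2 \<Rightarrow> 'a ser2" where "mul_vinv F = (\<lambda>a b. F a (b - 1))"

definition sc_ser :: "'a::ring_1 \<Rightarrow> 'a ser2 \<Rightarrow> 'a ser2" where "sc_ser c F = (\<lambda>a b. c * F a b)"

definition comm_ser :: "(int \<Rightarrow> 'a::ring_1) \<Rightarrow> (int \<Rightarrow> 'a) \<Rightarrow> 'a ser2" where
  "comm_ser f g = (\<lambda>a b. commut (f a) (g b))"

end

theory Submission imports Defs begin

definition DD :: "(int \<Rightarrow> int \<Rightarrow> 'a::ring_1) \<Rightarrow> int \<Rightarrow> int \<Rightarrow> 'a" where
  "DD P a b = P a b - P b a"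
definition HH :: "(int \<Rightarrow> int \<Rightarrow> 'a::ring_1) \<Rightarrow> int \<Rightarrow> int \<Rightarrow> 'a" where
  "HH P a b = (\<Sum>p<nat a. DD P (a - 1 - int p) (b + int p))"
definition KK :: "'a::ring_1 \<Rightarrow> (int \<Rightarrow> int \<Rightarrow> 'a) \<Rightarrow> int \<Rightarrow> int \<Rightarrow> 'a" where
  "KK \<beta> P a b = (\<Sum>m<nat a. \<beta>^m * HH P (a - int m) (b - int m))"

lemma HH_nonpos: "a \<le> 0 \<Longrightarrow> HH P a b = 0"
  by (simp add: HH_def)

lemma HH_step: "a \<ge> 0 \<Longrightarrow> HH P (a+1) b = DD P a b + HH P a (b+1)"
proof -
  assume a: "a \<ge> 0"
  have "nat (a+1) = Suc (nat a)" using a by simp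
  then have "HH P (a+1) b = DD P a b + (\<Sum>p<nat a. DD P (a + 1 - 1 - int (Suc p)) (b + int (Suc p)))"
    unfolding HH_def by (simp only: sum.lessThan_Suc_shift) simp
  also have "\<dots> = DD P a b + HH P a (b+1)"
    unfolding HH_def by (intro arg_cong[where f="\<lambda>x. DD P a b + x"] sum.cong) (auto simp: algebra_simps)
  finally show ?thesis .
qed

lemma HH_zero0:
  assumes P: "\<forall>a b. a < 0 \<or> b < 0 \<longrightarrow> P a b = 0"
  shows "HH P a 0 = 0"
proof -
  have "(\<Sum>p<nat a. P (a - 1 - int p) (int p)) = (\<Sum>p<nat a. P (int p) (a - 1 - int p))"
  proof (cases "a \<ge> 0")
    case True
    have "(\<Sum>p<nat a. P (int p) (a - 1 - int p)) = (\<Sum>p<nat a. P (int (nat a - Suc p)) (a - 1 - int (nat a - Suc p)))"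
      by (rule sum.nat_diff_reindex[symmetric])
    also have "\<dots> = (\<Sum>p<nat a. P (a - 1 - int p) (int p))"
      by (intro sum.cong) (use True in \<open>auto simp: of_nat_diff algebra_simps\<close>)
    finally show ?thesis by simp
  qed simp
  then show ?thesis by (simp add: HH_def DD_def sum_subtractf)
qed

lemma HH_neg:
  assumes P: "\<forall>a b. a < 0 \<or> b < 0 \<longrightarrow> P a b = 0"
  shows "\<forall>a. HH P a (- int k) = HH P (a - int k) 0"
proof (induction k)
  case 0 then show ?case by simp
next
  case (Suc k)
  show ?case
  proof
    fix a
    show "HH P a (- int (Suc k)) = HH P (a - int (Suc k)) 0"
    proof (cases "a \<ge> 1")
      case True
      have "HH P a (- int (Suc k)) = HH P ((a-1)+1) (- int (Suc k))" by simp
      also have "\<dots> = DD P (a-1) (- int (Suc k)) + HH P (a-1) (- int (Suc k) + 1)"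
        using True by (intro HH_step) simp
      also have "DD P (a-1) (- int (Suc k)) = 0" using P by (simp add: DD_def)
      also have "- int (Suc k) + 1 = - int k" by simp
      also have "HH P (a-1) (- int k) = HH P (a - int (Suc k)) 0" using Suc.IH by (simp add: algebra_simps)
      finally show ?thesis by simp
    qed (simp add: HH_nonpos)
  qed
qed

lemma HH_bnonpos:
  assumes P: "\<forall>a b. a < 0 \<or> b < 0 \<longrightarrow> P a b = 0" and b: "b \<le> 0"
  shows "HH P a b = 0"
proof -
  have "b = - int (nat (-b))" using b by simp
  then have "HH P a b = HH P (a - int (nat (-b))) 0" using HH_neg[OF P, of "nat (-b)"] by metis
  then show ?thesis using HH_zero0[OF P] by simp
qed

lemma KK_nonpos: "a \<le> 0 \<Longrightarrow> KK \<beta> P a b = 0"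
  by (simp add: KK_def)

lemma KK_bnonpos:
  assumes P: "\<forall>a b. a < 0 \<or> b < 0 \<longrightarrow> P a b = 0" and b: "b \<le> 0"
  shows "KK \<beta> P a b = 0"
  unfolding KK_def using HH_bnonpos[OF P] b by (intro sum.neutral) auto

lemma KK_step: "KK \<beta> P a b = HH P a b + \<beta> * KK \<beta> P (a-1) (b-1)"
proof (cases "a \<ge> 1")
  case True
  have "nat a = Suc (nat (a-1))" using True by simp
  then have "KK \<beta> P a b = HH P a b + (\<Sum>m<nat (a-1). \<beta>^(Suc m) * HH P (a - int (Suc m)) (b - int (Suc m)))"
    unfolding KK_def by (simp only: sum.lessThan_Suc_shift) simp
  also have "(\<Sum>m<nat (a-1). \<beta>^(Suc m) * HH P (a - int (Suc m)) (b - int (Suc m))) = \<beta> * KK \<beta> P (a-1) (b-1)"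
    unfolding KK_def sum_distrib_left by (intro sum.cong) (auto simp: algebra_simps)
  finally show ?thesis .
qed (simp add: KK_nonpos HH_nonpos)

lemma KK_rec:
  assumes P: "\<forall>a b. a < 0 \<or> b < 0 \<longrightarrow> P a b = 0"
  shows "KK \<beta> P (a+1) b + \<beta> * KK \<beta> P (a-1) b - KK \<beta> P a (b+1) - \<beta> * KK \<beta> P a (b-1) = DD P a b"
proof -
  have 1: "KK \<beta> P (a+1) b = HH P (a+1) b + \<beta> * KK \<beta> P a (b-1)" using KK_step[of \<beta> P "a+1" b] by simp
  have 2: "KK \<beta> P a (b+1) = HH P a (b+1) + \<beta> * KK \<beta> P (a-1) b" using KK_step[of \<beta> P a "b+1"] by simp
  have 3: "HH P (a+1) b - HH P a (b+1) = DD P a b"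
  proof (cases "a \<ge> 0")
    case True then show ?thesis using HH_step[OF True, of P b] by simp
  next
    case False then show ?thesis using P by (simp add: HH_nonpos DD_def)
  qed
  show ?thesis using 3 unfolding 1 2 by (simp add: algebra_simps)
qed

lemma uniq:
  fixes G :: "int \<Rightarrow> int \<Rightarrow> 'a::ring_1"
  assumes Z: "\<forall>a b. a \<le> 0 \<or> b \<le> 0 \<longrightarrow> G a b = 0"
    and R: "\<forall>a b. G (a+1) b + \<beta> * G (a-1) b - G a (b+1) - \<beta> * G a (b-1) = 0"
  shows "G a b = 0"
proof -
  have "\<forall>b. G (int n) b = 0 \<and> G (int n + 1) b = 0" for n
  proof (induction n)
    case 0
    show ?case
    proof
      fix b
      show "G (int 0) b = 0 \<and> G (int 0 + 1) b = 0" using R[rule_format, of 0 b] Z by simp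
    qed
  next
    case (Suc n)
    show ?case
    proof
      fix b
      have "G (int n + 1 + 1) b + \<beta> * G (int n + 1 - 1) b - G (int n + 1) (b + 1) - \<beta> * G (int n + 1) (b - 1) = 0"
        using R by blast
      then have "G (int n + 2) b = 0" using Suc.IH by (simp add: algebra_simps)
      then show "G (int (Suc n)) b = 0 \<and> G (int (Suc n) + 1) b = 0" using Suc.IH by (simp add: algebra_simps)
    qed
  qed
  note X = this
  show ?thesis
  proof (cases "a \<le> 0")
    case True then show ?thesis using Z by blast
  next
    case False
    then have "a = int (nat a)" by simp
    then show ?thesis using X[of "nat a"] by metis
  qed
qed

lemma KK_closed:
  assumes P: "\<forall>a b. a < 0 \<or> b < 0 \<longrightarrow> P a b = 0"
  shows "KK \<beta> P (int r) (int s) = (\<Sum>(p, m) \<in> {(p, m). m \<le> p + s \<and> p + m + 1 \<le> r}.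
      \<beta>^m * (P (int (r - p - m - 1)) (int (p + s - m)) - P (int (p + s - m)) (int (r - p - m - 1))))"
proof -
  define g where "g = (\<lambda>(p::nat, m::nat). \<beta>^m * DD P (int r - int m - 1 - int p) (int s - int m + int p))"
  define T where "T = {(p::nat, m::nat). p + m + 1 \<le> r}"
  define S where "S = {(p::nat, m::nat). m \<le> p + s \<and> p + m + 1 \<le> r}"
  have "KK \<beta> P (int r) (int s) = (\<Sum>m<r. \<Sum>p<r-m. g (p, m))"
    unfolding KK_def HH_def g_def sum_distrib_left
    by (intro sum.cong) (auto simp: of_nat_diff algebra_simps)
  also have "\<dots> = (\<Sum>(m,p) \<in> Sigma {..<r} (\<lambda>m. {..<r-m}). g (p, m))"
    by (subst sum.Sigma) auto
  also have "\<dots> = (\<Sum>x \<in> T. g x)"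
    by (rule sum.reindex_bij_witness[where i=prod.swap and j=prod.swap]) (auto simp: T_def)
  also have "\<dots> = (\<Sum>x \<in> S. g x)"
  proof (rule sum.mono_neutral_right)
    show "finite T"
      by (rule finite_subset[of _ "{..<r} \<times> {..<r}"]) (auto simp: T_def)
    show "S \<subseteq> T" by (auto simp: S_def T_def)
    show "\<forall>x\<in>T - S. g x = 0"
    proof
      fix x assume x: "x \<in> T - S"
      obtain p m where xpm: "x = (p, m)" by (cases x)
      with x have "int s - int m + int p < 0" by (auto simp: S_def T_def)
      with P show "g x = 0" by (simp add: xpm g_def DD_def)
    qed
  qed
  also have "\<dots> = (\<Sum>(p, m) \<in> S.
      \<beta>^m * (P (int (r - p - m - 1)) (int (p + s - m)) - P (int (p + s - m)) (int (r - p - m - 1))))"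
    by (intro sum.cong) (auto simp: S_def g_def DD_def of_nat_diff algebra_simps)
  finally show ?thesis unfolding S_def .
qed

lemma core:
  fixes C P :: "int \<Rightarrow> int \<Rightarrow> 'a::ring_1" and \<beta> :: 'a
  assumes C: "\<forall>a b. a \<le> 0 \<or> b \<le> 0 \<longrightarrow> C a b = 0"
    and P: "\<forall>a b. a < 0 \<or> b < 0 \<longrightarrow> P a b = 0"
  shows "(\<forall>a b. C (a+1) b + \<beta> * C (a-1) b - C a (b+1) - \<beta> * C a (b-1) = P a b - P b a)
    \<longleftrightarrow> (\<forall>r s. r \<ge> 1 \<longrightarrow> s \<ge> 1 \<longrightarrow> C (int r) (int s) = (\<Sum>(p, m) \<in> {(p, m). m \<le> p + s \<and> p + m + 1 \<le> r}.
      \<beta>^m * (P (int (r - p - m - 1)) (int (p + s - m)) - P (int (p + s - m)) (int (r - p - m - 1)))))"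
    (is "?L \<longleftrightarrow> ?R")
proof -
  have KZ: "\<forall>a b. a \<le> 0 \<or> b \<le> 0 \<longrightarrow> KK \<beta> P a b = 0"
    using KK_nonpos KK_bnonpos[OF P] by blast
  have "?L \<longleftrightarrow> (\<forall>a b. C a b = KK \<beta> P a b)"
  proof
    assume L: ?L
    show "\<forall>a b. C a b = KK \<beta> P a b"
    proof (intro allI)
      fix a b
      let ?G = "\<lambda>a b. C a b - KK \<beta> P a b"
      have "?G a b = 0"
      proof (rule uniq)
        show "\<forall>a b. a \<le> 0 \<or> b \<le> 0 \<longrightarrow> ?G a b = 0" using C KZ by simp
        show "\<forall>a b. ?G (a+1) b + \<beta> * ?G (a-1) b - ?G a (b+1) - \<beta> * ?G a (b-1) = 0"
        proof (intro allI)
          fix a b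
          have 1: "C (a+1) b + \<beta> * C (a-1) b - C a (b+1) - \<beta> * C a (b-1) = DD P a b"
            using L by (simp add: DD_def)
          have 2: "KK \<beta> P (a+1) b + \<beta> * KK \<beta> P (a-1) b - KK \<beta> P a (b+1) - \<beta> * KK \<beta> P a (b-1) = DD P a b"
            by (rule KK_rec[OF P])
          show "?G (a+1) b + \<beta> * ?G (a-1) b - ?G a (b+1) - \<beta> * ?G a (b-1) = 0"
            using 1 2 by (simp add: algebra_simps)
        qed
      qed
      then show "C a b = KK \<beta> P a b" by simp
    qed
  next
    assume "\<forall>a b. C a b = KK \<beta> P a b"
    then show ?L using KK_rec[OF P] by (simp add: DD_def)
  qed
  also have "\<dots> \<longleftrightarrow> ?R"
  proof
    assume E: "\<forall>a b. C a b = KK \<beta> P a b"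
    show ?R using E KK_closed[OF P] by simp
  next
    assume R: ?R
    show "\<forall>a b. C a b = KK \<beta> P a b"
    proof (intro allI)
      fix a b
      show "C a b = KK \<beta> P a b"
      proof (cases "a \<le> 0 \<or> b \<le> 0")
        case True then show ?thesis using C KZ by metis
      next
        case False
        then have ab: "a = int (nat a)" "b = int (nat b)" and r1: "nat a \<ge> 1" and s1: "nat b \<ge> 1" by auto
        have "C (int (nat a)) (int (nat b)) = KK \<beta> P (int (nat a)) (int (nat b))"
          by (rule trans[OF R[rule_format, OF r1 s1] KK_closed[OF P, symmetric]])
        then show ?thesis using ab by simp
      qed
    qed
  qed
  finally show ?thesis .
qed


lemma sc_pow:
  assumes "calg_struct sc"
  shows "sc (x ^ m) = sc x ^ m"
proof -
  have one: "sc 1 = 1" and mult: "\<And>a b. sc (a * b) = sc a * sc b"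
    using assms unfolding calg_struct_def by blast+
  show ?thesis by (induction m) (simp_all add: one mult)
qed

lemma per_tuple:
  fixes sc :: "complex \<Rightarrow> 'a::ring_1" and \<beta> :: complex and t :: "nat \<Rightarrow> nat \<Rightarrow> nat \<Rightarrow> 'a"
  assumes sc: "calg_struct sc"
  shows "(\<forall>a b. (let C = comm_ser (tc t i j) (tc t k l) in
              mul_u C a b + sc_ser (sc \<beta>) (mul_uinv C) a b - mul_v C a b
                - sc_ser (sc \<beta>) (mul_vinv C) a b)
           = ser_uv (tc t k j) (tc t i l) a b - ser_vu (tc t k j) (tc t i l) a b)
     \<longleftrightarrow> (\<forall>r s. r \<ge> 1 \<longrightarrow> s \<ge> 1 \<longrightarrow>
           commut (t i j r) (t k l s)
           = (\<Sum>(p, m) \<in> {(p, m). m \<le> p + s \<and> p + m + 1 \<le> r}.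
                sc (\<beta> ^ m) * (tc t k j (int (r - p - m - 1)) * tc t i l (int (p + s - m))
                              - tc t k j (int (p + s - m)) * tc t i l (int (r - p - m - 1)))))"
proof -
  define C where "C = (\<lambda>a b. commut (tc t i j a) (tc t k l b))"
  define P where "P = (\<lambda>a b. tc t k j a * tc t i l b)"
  have CZ: "\<forall>a b. a \<le> 0 \<or> b \<le> 0 \<longrightarrow> C a b = 0"
    by (auto simp: C_def tc_def commut_def)
  have PZ: "\<forall>a b. a < 0 \<or> b < 0 \<longrightarrow> P a b = 0"
    by (auto simp: P_def tc_def)
  have L: "(\<forall>a b. (let C = comm_ser (tc t i j) (tc t k l) in
              mul_u C a b + sc_ser (sc \<beta>) (mul_uinv C) a b - mul_v C a b
                - sc_ser (sc \<beta>) (mul_vinv C) a b)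
           = ser_uv (tc t k j) (tc t i l) a b - ser_vu (tc t k j) (tc t i l) a b)
     \<longleftrightarrow> (\<forall>a b. C (a+1) b + sc \<beta> * C (a-1) b - C a (b+1) - sc \<beta> * C a (b-1) = P a b - P b a)"
    by (simp add: Let_def comm_ser_def mul_u_def mul_uinv_def mul_v_def mul_vinv_def sc_ser_def
        ser_uv_def ser_vu_def C_def P_def)
  have R: "(\<forall>r s. r \<ge> 1 \<longrightarrow> s \<ge> 1 \<longrightarrow>
           commut (t i j r) (t k l s)
           = (\<Sum>(p, m) \<in> {(p, m). m \<le> p + s \<and> p + m + 1 \<le> r}.
                sc (\<beta> ^ m) * (tc t k j (int (r - p - m - 1)) * tc t i l (int (p + s - m))
                              - tc t k j (int (p + s - m)) * tc t i l (int (r - p - m - 1)))))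
     \<longleftrightarrow> (\<forall>r s. r \<ge> 1 \<longrightarrow> s \<ge> 1 \<longrightarrow> C (int r) (int s) = (\<Sum>(p, m) \<in> {(p, m). m \<le> p + s \<and> p + m + 1 \<le> r}.
      sc \<beta>^m * (P (int (r - p - m - 1)) (int (p + s - m)) - P (int (p + s - m)) (int (r - p - m - 1)))))"
  proof -
    have "r \<ge> 1 \<Longrightarrow> s \<ge> 1 \<Longrightarrow> C (int r) (int s) = commut (t i j r) (t k l s)" for r s
      by (simp add: C_def tc_def)
    then show ?thesis by (simp add: sc_pow[OF sc] P_def)
  qed
  show ?thesis by (rule trans[OF L trans[OF core[OF CZ PZ] R[symmetric]]])
qed

theorem mainTheorem6:
  fixes sc :: "complex \<Rightarrow> 'a::ring_1"
    and \<beta> :: complex and n :: nat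
    and t :: "nat \<Rightarrow> nat \<Rightarrow> nat \<Rightarrow> 'a"
  assumes "calg_struct sc" and "n \<ge> 1" and "\<beta> \<noteq> 0"
  shows "(\<forall>i\<in>{1..n}. \<forall>j\<in>{1..n}. \<forall>k\<in>{1..n}. \<forall>l\<in>{1..n}.
           (\<forall>a b. (let C = comm_ser (tc t i j) (tc t k l) in
              mul_u C a b + sc_ser (sc \<beta>) (mul_uinv C) a b - mul_v C a b
                - sc_ser (sc \<beta>) (mul_vinv C) a b)
           = ser_uv (tc t k j) (tc t i l) a b - ser_vu (tc t k j) (tc t i l) a b))
     \<longleftrightarrow>
         (\<forall>r\<ge>1. \<forall>s\<ge>1. \<forall>i\<in>{1..n}. \<forall>j\<in>{1..n}. \<forall>k\<in>{1..n}. \<forall>l\<in>{1..n}.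
           commut (t i j r) (t k l s)
           = (\<Sum>(p, m) \<in> {(p, m). m \<le> p + s \<and> p + m + 1 \<le> r}.
                sc (\<beta> ^ m) * (tc t k j (int (r - p - m - 1)) * tc t i l (int (p + s - m))
                              - tc t k j (int (p + s - m)) * tc t i l (int (r - p - m - 1)))))"
    apply (intro iffI allI impI ballI)
  subgoal premises pr for r s i j k l
  proof -
    have h: "\<forall>a b. (let C = comm_ser (tc t i j) (tc t k l) in
              mul_u C a b + sc_ser (sc \<beta>) (mul_uinv C) a b - mul_v C a b
                - sc_ser (sc \<beta>) (mul_vinv C) a b)
           = ser_uv (tc t k j) (tc t i l) a b - ser_vu (tc t k j) (tc t i l) a b"
      by (rule bspec[OF bspec[OF bspec[OF bspec[OF pr(1) pr(4)] pr(5)] pr(6)] pr(7)])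
    note h2 = iffD1[OF per_tuple[OF assms(1)] h]
    show ?thesis using spec[OF spec[OF h2, of r], of s] pr(2) pr(3) by (elim impE)
  qed
  subgoal premises pr for i j k l a b
  proof -
    have h: "\<forall>r s. r \<ge> 1 \<longrightarrow> s \<ge> 1 \<longrightarrow>
           commut (t i j r) (t k l s)
           = (\<Sum>(p, m) \<in> {(p, m). m \<le> p + s \<and> p + m + 1 \<le> r}.
                sc (\<beta> ^ m) * (tc t k j (int (r - p - m - 1)) * tc t i l (int (p + s - m))
                              - tc t k j (int (p + s - m)) * tc t i l (int (r - p - m - 1))))"
    proof (intro allI impI)
      fix r s :: nat assume r1: "r \<ge> 1" and s1: "s \<ge> 1"
      show "commut (t i j r) (t k l s)
           = (\<Sum>(p, m) \<in> {(p, m). m \<le> p + s \<and> p + m + 1 \<le> r}.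
                sc (\<beta> ^ m) * (tc t k j (int (r - p - m - 1)) * tc t i l (int (p + s - m))
                              - tc t k j (int (p + s - m)) * tc t i l (int (r - p - m - 1))))"
        by (rule bspec[OF bspec[OF bspec[OF bspec[OF mp[OF spec[OF mp[OF spec[OF pr(1), of r] r1], of s] s1] pr(2)] pr(3)] pr(4)] pr(5)])
    qed
    show ?thesis using spec[OF spec[OF iffD2[OF per_tuple[OF assms(1)] h], of a], of b] .
  qed
  done

end
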